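(* Fix an integer $d\ge1$ and let $S_d=\langle a_0,\dots,a_d,s\mid s a_0 s^{-1}a_0^{-1},\ a_{i+1}a_ia_{i+1}^{-1}a_0^{-1}\ (0\le i<d)\rangle$. For $0\le i<j\le d$ and $n\ge1$ let $f_{i,j}(n)=\tfrac12\,\bigl|\mathrm{vrim}(\mathrm{Fan}(a_i^n,a_j^n))\bigr|$. Then $f_{i,j}(n)$ is a polynomial in $n$ of degree $j$; in fact \[ f_{i,j}(n)=\sum_{k=i+1}^{j}\binom{n+k-1}{n-1}. \]
   Context: Each relator of $S_d$ has the form $\lambda p\lambda^{-1}q^{-1}$ with $(\lambda,p,q)=(s,a_0,a_0)$ or $(a_{i+1},a_i,a_0)$. In the unit square of such a relator in the presentation complex, reading from a corner $B$: $\lambda$ goes from $B$ to $Q$, $p$ from $Q$ to the top corner $T$, $\lambda$ from $R$ to $T$, $q$ from $B$ to $R$; the edges $p,\lambda$ into $T$ are the top edges. The descending link is the graph on the generators in which $u,v$ are adjacent iff some relator square has top edges labeled $u$ and $v$; for $S_d$ it is the path $s - a_0 - a_1 - \cdots - a_d$, and each adjacent pair corresponds to a unique relator. For a relator $e$ put $x_e=q^{-1}\lambda$. Simple fans: $\mathrm{Fan}(a,a)$ is a single edge labeled $a$ (apex at its end), empty rims. For distinct generators $a,b$, let $a=v_0,\dots,v_k=b$ be the path in the descending link, take copies $C_i$ of the relator square with top edges $v_{i-1},v_i$, and glue the top edge $v_i$ of $C_i$ to that of $C_{i+1}$ ($1\le i<k$); the common top corner is the apex. The vertex rim is the concatenation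 of the two-letter words read along the bottom of $C_i$ from the initial vertex of its top edge $v_{i-1}$ to the initial vertex of its top edge $v_i$ (each is $q^{-1}\lambda$ or $\lambda^{-1}q$), so it has the form $a_1^{-1}b_1\cdots a_k^{-1}b_k$; the edge rim replaces $q^{-1}\lambda$ by $x_e$ and $\lambda^{-1}q$ by $x_e^{-1}$. Fans of height $n\ge2$: for positive words $u=au'$, $v=bv'$ of length $n$ with $a,b$ generators, let $F'=\mathrm{Fan}(u',v')$ with vertex rim $a_1^{-1}b_1\cdots a_k^{-1}b_k$, put $b_0=a$, $a_{k+1}=b$, and attach for $i=1,\dots,k+1$ the simple fan $\mathrm{Fan}(b_{i-1},a_i)$ with apex at the rim vertex where the edges $b_{i-1}$ and $a_i$ terminate (for $i=1$, the initial vertex of the side $u'$, the new edge $a$ extending that side; symmetrically for $i=k+1$), identifying its top edges with the corresponding edges. This is $\mathrm{Fan}(u,v)$; its vertex and edge rims are the concatenations of those of the attached simple fans. $|w|$ is the length of a word $w$. *)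

theory Defs
  imports "HOL-Computational_Algebra.Polynomial"
begin

datatype gen = s | a nat

text \<open>Letters of a word: (generator, True) is the generator, (generator, False) its inverse.\<close>
type_synonym letter = "gen \<times> bool"

text \<open>A relator lambda p lambda^-1 q^-1 is encoded by the triple (lambda, p, q).\<close>
type_synonym relator = "gen \<times> gen \<times> gen"

definition rlam :: "relator \<Rightarrow> gen" where "rlam e = fst e"
definition rp :: "relator \<Rightarrow> gen" where "rp e = fst (snd e)"
definition rq :: "relator \<Rightarrow> gen" where "rq e = snd (snd e)"

definition relators :: "nat \<Rightarrow> relator list" where
  "relators d = (s, a 0, a 0) # map (\<lambda>i. (a (Suc i), a i, a 0)) [0..<d]"

definition top_edges :: "relator \<Rightarrow> gen set" where
  "top_edges e = {rp e, rlam e}"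

definition dlink_adj :: "nat \<Rightarrow> gen \<Rightarrow> gen \<Rightarrow> bool" where
  "dlink_adj d u v \<longleftrightarrow> (\<exists>e\<in>set (relators d). top_edges e = {u, v})"

definition rel_of :: "nat \<Rightarrow> gen \<Rightarrow> gen \<Rightarrow> relator" where
  "rel_of d u v = (THE e. e \<in> set (relators d) \<and> top_edges e = {u, v})"

text \<open>The descending link of S_d is the path s - a_0 - a_1 - ... - a_d;
  position of a generator along it, and the path between two generators.\<close>
fun gpos :: "gen \<Rightarrow> nat" where
  "gpos s = 0" | "gpos (a i) = Suc i"

fun gof :: "nat \<Rightarrow> gen" where
  "gof 0 = s" | "gof (Suc i) = a i"

definition link_path :: "gen \<Rightarrow> gen \<Rightarrow> gen list" where
  "link_path x y = map gof (if gpos x \<le> gpos y then [gpos x..<Suc (gpos y)]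
                            else rev [gpos y..<Suc (gpos x)])"

text \<open>Two-letter word read along the bottom of square e from the initial vertex
  of its top edge u to the initial vertex of its other top edge:
  lambda^-1 q if u = p, and q^-1 lambda if u = lambda.\<close>
definition square_piece :: "relator \<Rightarrow> gen \<Rightarrow> letter list" where
  "square_piece e u = (if u = rp e then [(rlam e, False), (rq e, True)]
                       else [(rq e, False), (rlam e, True)])"

text \<open>Vertex rim of the simple fan Fan(x,y) (empty if x = y).\<close>
definition simple_vrim :: "nat \<Rightarrow> gen \<Rightarrow> gen \<Rightarrow> letter list" where
  "simple_vrim d x y = (let P = link_path x y in
      concat (map (\<lambda>(u, v). square_piece (rel_of d u v) u) (zip P (tl P))))"

fun pairs :: "'x list \<Rightarrow> ('x \<times> 'x) list" where
  "pairs (x # y # r) = (x, y) # pairs r"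
| "pairs _ = []"

text \<open>Vertex rim of Fan(u,v) for positive words u, v of equal length n >= 1.
  If the rim of Fan(u',v') is a_1^-1 b_1 ... a_k^-1 b_k, the rim of
  Fan(a u', b v') is the concatenation of the rims of Fan(b_{i-1}, a_i),
  i = 1..k+1, with b_0 = a and a_{k+1} = b.\<close>
fun fan_vrim :: "nat \<Rightarrow> gen list \<Rightarrow> gen list \<Rightarrow> letter list" where
  "fan_vrim d [x] [y] = simple_vrim d x y"
| "fan_vrim d (x # u') (y # v') =
     (let r = fan_vrim d u' v';
          seq = x # map fst r @ [y]
      in concat (map (\<lambda>(g, h). simple_vrim d g h) (pairs seq)))"
| "fan_vrim d _ _ = []"

definition f_ij :: "nat \<Rightarrow> nat \<Rightarrow> nat \<Rightarrow> nat \<Rightarrow> real" where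
  "f_ij d i j n = real (length (fan_vrim d (replicate n (a i)) (replicate n (a j)))) / 2"

end

theory Submission
  imports Defs
begin

definition pc :: "nat \<Rightarrow> letter list" where
  "pc m = [(a m, False), (a 0, True)]"

definition rimL :: "nat list \<Rightarrow> letter list" where
  "rimL ms = concat (map pc ms)"

lemma rel_of_up:
  assumes "m < d"
  shows "rel_of d (a m) (a (Suc m)) = (a (Suc m), a m, a 0)"
  unfolding rel_of_def
proof (rule the_equality)
  show "(a (Suc m), a m, a 0) \<in> set (relators d) \<and>
    top_edges (a (Suc m), a m, a 0) = {a m, a (Suc m)}"
    using assms by (auto simp: relators_def top_edges_def rp_def rlam_def)
next
  fix e assume "e \<in> set (relators d) \<and> top_edges e = {a m, a (Suc m)}"
  then show "e = (a (Suc m), a m, a 0)"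
    by (auto simp: relators_def top_edges_def rp_def rlam_def doubleton_eq_iff)
qed

lemma zip_tl_upt: "x \<le> y \<Longrightarrow> zip (map f [x..<Suc y]) (tl (map f [x..<Suc y]))
   = map (\<lambda>m. (f m, f (Suc m))) [x..<y]"
proof (induction "y - x" arbitrary: x)
  case 0 then show ?case by simp
next
  case (Suc k)
  then have xy: "x < y" by simp
  have e1: "[x..<Suc y] = x # [Suc x..<Suc y]" using xy by (simp add: upt_conv_Cons)
  have e2: "[Suc x..<Suc y] = Suc x # [Suc (Suc x)..<Suc y]" using xy by (simp add: upt_conv_Cons)
  have e3: "[x..<y] = x # [Suc x..<y]" using xy by (simp add: upt_conv_Cons)
  have IH: "zip (map f [Suc x..<Suc y]) (tl (map f [Suc x..<Suc y])) = map (\<lambda>m. (f m, f (Suc m))) [Suc x..<y]"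
    using Suc xy by (simp del: upt_Suc)
  show ?case using IH unfolding e1 e3 by (simp del: upt_Suc add: e2)
qed

lemma link_path_up: "x \<le> y \<Longrightarrow> link_path (a x) (a y) = map a [x..<Suc y]"
proof -
  assume "x \<le> y"
  then have "link_path (a x) (a y) = map gof (map Suc [x..<Suc y])"
    by (simp del: upt_Suc add: link_path_def map_Suc_upt)
  also have "\<dots> = map a [x..<Suc y]" by (simp del: upt_Suc)
  finally show ?thesis .
qed

lemma simple_up:
  assumes "x \<le> y" "y \<le> d"
  shows "simple_vrim d (a x) (a y) = rimL [Suc x..<Suc y]"
proof -
  have "simple_vrim d (a x) (a y) =
     concat (map (\<lambda>(u, v). square_piece (rel_of d u v) u) (map (\<lambda>m. (a m, a (Suc m))) [x..<y]))"
    using assms by (simp del: upt_Suc add: simple_vrim_def link_path_up zip_tl_upt Let_def)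
  also have "\<dots> = concat (map (\<lambda>m. pc (Suc m)) [x..<y])"
    using assms by (intro arg_cong[where f=concat] map_cong)
      (auto simp: rel_of_up square_piece_def rp_def rlam_def rq_def pc_def)
  also have "\<dots> = rimL [Suc x..<Suc y]"
    by (simp del: upt_Suc add: rimL_def map_Suc_upt[symmetric] comp_def)
  finally show ?thesis .
qed

fun M :: "nat \<Rightarrow> nat \<Rightarrow> nat \<Rightarrow> nat list" where
  "M i j 0 = [Suc i..<j]"
| "M i j (Suc n) = concat (map (\<lambda>k. [0..<Suc k]) (M i j n)) @ [0..<j]"

lemma M_bound: "k \<in> set (M i j n) \<Longrightarrow> k < j"
  by (induction n arbitrary: k) (simp, fastforce)

lemma concat_map_concat: "concat (map f (concat xss)) = concat (map (\<lambda>xs. concat (map f xs)) xss)"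
  by (induction xss) auto

lemma pairs_lemma: "pairs (h # concat (map (\<lambda>m. [f m, h]) rest) @ [y]) = map (\<lambda>m. (h, f m)) rest @ [(h,y)]"
  by (induction rest) auto

lemma rimL_append: "rimL (xs @ ys) = rimL xs @ rimL ys" by (simp add: rimL_def)
lemma rimL_concat: "rimL (concat xss) = concat (map rimL xss)" by (induction xss) (auto simp: rimL_def)
lemma map_fst_rimL: "map fst (rimL ms) = concat (map (\<lambda>m. [a m, a 0]) ms)"
  by (induction ms) (auto simp: rimL_def pc_def)

lemma fan_eq:
  assumes "i < j" "j \<le> d"
  shows "fan_vrim d (replicate (Suc n) (a i)) (replicate (Suc n) (a j)) = rimL (Suc i # map Suc (M i j n))"
proof (induction n)
  case 0
  have "[Suc i..<Suc j] = Suc i # map Suc [Suc i..<j]"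
    using assms by (simp del: upt_Suc add: upt_conv_Cons map_Suc_upt)
  then show ?case using assms by (simp del: upt_Suc add: simple_up)
next
  case (Suc n)
  let ?M = "M i j n"
  have seq: "a i # map fst (rimL (Suc i # map Suc ?M)) @ [a j]
     = a i # a (Suc i) # (a 0 # concat (map (\<lambda>m. [a (Suc m), a 0]) ?M) @ [a j])"
    by (simp add: map_fst_rimL comp_def)
  have pr: "pairs (a i # map fst (rimL (Suc i # map Suc ?M)) @ [a j])
     = (a i, a (Suc i)) # map (\<lambda>m. (a 0, a (Suc m))) ?M @ [(a 0, a j)]"
    unfolding seq using pairs_lemma[of "a 0" "\<lambda>m. a (Suc m)" ?M "a j"] by simp
  have s1: "simple_vrim d (a i) (a (Suc i)) = rimL [Suc i]"
    using assms simple_up[of i "Suc i" d] by simp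
  have s2: "simple_vrim d (a 0) (a (Suc m)) = rimL (map Suc [0..<Suc m])" if "m \<in> set ?M" for m
    using assms M_bound[OF that] simple_up[of 0 "Suc m" d] by (simp del: upt_Suc add: map_Suc_upt)
  have s3: "simple_vrim d (a 0) (a j) = rimL (map Suc [0..<j])"
    using assms simple_up[of 0 j d] by (simp del: upt_Suc add: map_Suc_upt)
  have "fan_vrim d (replicate (Suc (Suc n)) (a i)) (replicate (Suc (Suc n)) (a j))
     = concat (map (\<lambda>(g, h). simple_vrim d g h) (pairs (a i # map fst (rimL (Suc i # map Suc ?M)) @ [a j])))"
    using Suc by (simp del: upt_Suc replicate.simps add: replicate_Suc Let_def)
  also have "\<dots> = rimL [Suc i] @ concat (map (\<lambda>m. rimL (map Suc [0..<Suc m])) ?M) @ rimL (map Suc [0..<j])"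
    unfolding pr using s1 s2 s3 by (simp del: upt_Suc cong: map_cong)
  also have "\<dots> = rimL (Suc i # map Suc (M i j (Suc n)))"
    by (simp del: upt_Suc add: rimL_def concat_map_concat comp_def)
  finally show ?case .
qed

definition H :: "nat \<Rightarrow> nat list \<Rightarrow> nat" where
  "H t xs = sum_list (map (\<lambda>k. (t + k) choose t) xs)"

lemma hock: "(\<Sum>k<m. (t + k) choose t) = (t + m) choose Suc t"
  by (induction m) auto

lemma H_append: "H t (xs @ ys) = H t xs + H t ys" by (simp add: H_def)

lemma H_phi: "H t (concat (map (\<lambda>k. [0..<Suc k]) xs)) = H (Suc t) xs"
proof (induction xs)
  case Nil then show ?case by (simp add: H_def)
next
  case (Cons x xs)
  have "H t [0..<Suc x] = (Suc t + x) choose Suc t"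
    using hock[where m="Suc x" and t=t] by (simp add: H_def interv_sum_list_conv_sum_set_nat lessThan_atLeast0 del: upt_Suc)
  then show ?case using Cons by (simp del: upt_Suc add: H_append) (simp add: H_def)
qed

lemma H_upt: "H t [0..<j] = (t + j) choose Suc t"
  using hock[where m=j and t=t] by (simp add: H_def interv_sum_list_conv_sum_set_nat lessThan_atLeast0)

lemma H_M: "H t (M i j n) = H (t + n) (M i j 0) + (\<Sum>q<n. (t + q + j) choose Suc (t + q))"
proof (induction n arbitrary: t)
  case 0 then show ?case by simp
next
  case (Suc n)
  have "H t (M i j (Suc n)) = H (Suc t) (M i j n) + ((t + j) choose Suc t)"
    by (simp only: M.simps(2) H_append H_phi H_upt)
  also have "\<dots> = H (t + Suc n) (M i j 0) + (\<Sum>q<Suc n. (t + q + j) choose Suc (t + q))"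
  proof -
    have e: "(\<Sum>q<Suc n. (t + q + j) choose Suc (t + q)) = ((t + 0 + j) choose Suc (t + 0)) + (\<Sum>q<n. (t + Suc q + j) choose Suc (t + Suc q))"
      by (rule sum.lessThan_Suc_shift)
    have "H (Suc t) (M i j n) = H (Suc t + n) (M i j 0) + (\<Sum>q<n. (Suc t + q + j) choose Suc (Suc t + q))"
      by (rule Suc)
    then show ?thesis unfolding e by simp
  qed
  finally show ?case .
qed

lemma H0: "H 0 xs = length xs" by (induction xs) (auto simp: H_def)

lemma aux1: "1 + (\<Sum>q<n. (q + j) choose Suc q) = (n + j) choose n"
  by (induction n) auto

lemma count_formula:
  assumes "i < j"
  shows "Suc (length (M i j n)) = (\<Sum>k=i+1..j. (n + k) choose n)"
proof -
  have "length (M i j n) = H n [Suc i..<j] + (\<Sum>q<n. (q + j) choose Suc q)"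
    using H_M[of 0 i j n] by (simp add: H0)
  also have "H n [Suc i..<j] = (\<Sum>k\<in>{Suc i..<j}. (n + k) choose n)"
    by (simp only: H_def interv_sum_list_conv_sum_set_nat set_upt)
  finally have "Suc (length (M i j n)) = (\<Sum>k\<in>{Suc i..<j}. (n + k) choose n) + ((n + j) choose n)"
    using aux1[where n=n and j=j] by linarith
  also have "\<dots> = (\<Sum>k=i+1..j. (n + k) choose n)"
    using assms by (simp add: atLeastLessThanSuc_atLeastAtMost[symmetric] sum.atLeastLessThan_Suc)
  finally show ?thesis .
qed

definition Pk :: "nat \<Rightarrow> real poly" where
  "Pk k = smult (1 / fact k) (\<Prod>l<k. [:of_nat l, 1:])"

lemma degree_Pk: "degree (Pk k) = k"
proof -
  have "degree (\<Prod>l<k. [:of_nat l, 1:] :: real poly) = (\<Sum>l<k. degree ([:of_nat l, 1:] :: real poly))"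
    by (rule degree_prod_eq_sum_degree) auto
  then show ?thesis by (simp add: Pk_def)
qed

lemma poly_Pk:
  assumes "n \<ge> 1"
  shows "poly (Pk k) (real n) = real ((n + k - 1) choose (n - 1))"
proof -
  have "poly (Pk k) (real n) = (\<Prod>l<k. real n + of_nat l) / fact k"
    by (simp add: Pk_def poly_prod add.commute)
  also have "\<dots> = pochhammer (real n) k / fact k"
    by (simp add: pochhammer_prod lessThan_atLeast0)
  also have "\<dots> = real (n + k - 1) gchoose k"
    using assms by (simp add: gbinomial_pochhammer' of_nat_diff)
  also have "\<dots> = real ((n + k - 1) choose k)"
    by (simp add: binomial_gbinomial)
  also have "(n + k - 1) choose k = (n + k - 1) choose (n - 1)"
    using assms binomial_symmetric[of k "n + k - 1"] by simp
  finally show ?thesis .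
qed

lemma length_rimL: "length (rimL ms) = 2 * length ms"
  by (induction ms) (auto simp: rimL_def pc_def)

lemma f_val:
  assumes "i < j" "j \<le> d" "n \<ge> 1"
  shows "f_ij d i j n = real (\<Sum>k=i+1..j. (n - 1 + k) choose (n - 1))"
proof -
  obtain m where m: "n = Suc m" using assms(3) by (cases n) auto
  have "f_ij d i j n = real (Suc (length (M i j m)))"
    unfolding f_ij_def m fan_eq[OF assms(1,2)] length_rimL by simp
  then show ?thesis using count_formula[OF assms(1), where n=m] m by simp
qed

theorem mainTheorem5:
  fixes d i j :: nat
  assumes "d \<ge> 1" and "i < j" and "j \<le> d"
  shows "(\<exists>P :: real poly. degree P = j \<and> (\<forall>n\<ge>1. f_ij d i j n = poly P (real n)))
       \<and> (\<forall>n\<ge>1. f_ij d i j n = (\<Sum>k=i+1..j. real ((n + k - 1) choose (n - 1))))"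
proof
  have val: "f_ij d i j n = (\<Sum>k=i+1..j. real ((n + k - 1) choose (n - 1)))" if "n \<ge> 1" for n
  proof -
    have "\<And>k. n - 1 + k = n + k - 1" using that by simp
    then show ?thesis using f_val[OF assms(2,3) that] by simp
  qed
  then show "\<forall>n\<ge>1. f_ij d i j n = (\<Sum>k=i+1..j. real ((n + k - 1) choose (n - 1)))" by blast
  define P where "P = (\<Sum>k=i+1..j. Pk k)"
  have split: "P = (\<Sum>k\<in>{i+1..<j}. Pk k) + Pk j"
    unfolding P_def using assms
    by (simp add: atLeastLessThanSuc_atLeastAtMost[symmetric] sum.atLeastLessThan_Suc)
  have "degree (\<Sum>k\<in>{i+1..<j}. Pk k) \<le> j - 1"
    by (rule degree_sum_le) (auto simp: degree_Pk)
  then have "degree (\<Sum>k\<in>{i+1..<j}. Pk k) < degree (Pk j)"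
    using assms by (simp add: degree_Pk)
  then have degP: "degree P = j"
    unfolding split by (simp add: degree_add_eq_right degree_Pk)
  have "f_ij d i j n = poly P (real n)" if "n \<ge> 1" for n
    using val[OF that] poly_Pk[OF that] by (simp add: P_def poly_sum)
  then show "\<exists>P :: real poly. degree P = j \<and> (\<forall>n\<ge>1. f_ij d i j n = poly P (real n))"
    using degP by blast
qed

end
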